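(* Let $h\in\mathcal H$ and $\varphi(\underline{x})=h(x_0,x_1)$ on $X=[0,1]^{\mathbb N_0}$. Let $a,b\in[0,1]$ with $a\ne b$, let $I_{a,b}$ be the closed interval between $a$ and $b$, and assume $h$ is $C^1$ on a neighborhood of $\Lambda=\{(x,x): x\in I_{a,b}\}$. If $I_{a,b}\subset\mathrm{m}_h$, then \[H_\varphi(a^\infty,b^\infty)=\int_a^b D_2h(x,x)\,dx=-\int_a^b D_1h(x,x)\,dx=-H_\varphi(b^\infty,a^\infty).\]
   Context: $X=[0,1]^{\mathbb N_0}$ with metric $d_X(\underline{x},\underline{y})=\sum_{i\ge0}|x_i-y_i|/2^{i+1}$ and shift $\sigma(\underline{x})_i=x_{i+1}$. $\alpha_\varphi=\inf_\mu\int\varphi\,d\mu$ over $\sigma$-invariant Borel probability measures. $B(\underline{x},\underline{y},n;\varepsilon)=\{\underline{z}: d_X(\underline{x},\underline{z})<\varepsilon,\ d_X(\sigma^n\underline{z},\underline{y})<\varepsilon\}$; Peierls barrier $H_\varphi(\underline{x},\underline{y})=\lim_{\varepsilon\to0}\liminf_{n\to\infty}\inf\{\sum_{i=0}^{n-1}(\varphi(\sigma^i\underline{z})-\alpha_\varphi): \underline{z}\in B(\underline{x},\underline{y},n;\varepsilon)\}$. $h^*=\min_x h(x,x)$, $\mathrm{m}_h=\{a: h(a,a)=h^*\}$, $a^\infty=aaa\ldots$; $D_i$ is the partial derivative in the $i$-th variable. A finite sequence $(x_k,\dots,x_l)$ is minimal (for $h$) if $\sum_{i=k}^{l-1}h(x_i,x_{i+1})\le\sum_{i=k}^{l-1}h(y_i,y_{i+1})$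 for every $(y_k,\dots,y_l)$ in $[0,1]$ with the same endpoints. $\mathcal H$ is the set of Lipschitz $h:[0,1]^2\to\mathbb R$ such that (H3) if $\xi_1<\xi_2$, $\eta_1<\eta_2$ then $h(\xi_1,\eta_1)+h(\xi_2,\eta_2)<h(\xi_1,\eta_2)+h(\xi_2,\eta_1)$; and (H4) if $(x_{-1},x_0,x_1)\ne(x'_{-1},x_0,x'_1)$ are both minimal then $(x_{-1}-x'_{-1})(x_1-x'_1)<0$. *)

theory Defs
  imports "HOL-Analysis.Analysis" "HOL-Probability.Probability"
begin

definition Xs :: "(nat \<Rightarrow> real) set" where
  "Xs = {x. \<forall>i. x i \<in> {0..1}}"

definition dX :: "(nat \<Rightarrow> real) \<Rightarrow> (nat \<Rightarrow> real) \<Rightarrow> real" where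
  "dX x y = (\<Sum>i. \<bar>x i - y i\<bar> / 2 ^ (i + 1))"

definition shift :: "(nat \<Rightarrow> real) \<Rightarrow> (nat \<Rightarrow> real)" where
  "shift x = (\<lambda>i. x (Suc i))"

definition X_open :: "(nat \<Rightarrow> real) set \<Rightarrow> bool" where
  "X_open U \<longleftrightarrow> U \<subseteq> Xs \<and> (\<forall>x\<in>U. \<exists>e>0. \<forall>y\<in>Xs. dX x y < e \<longrightarrow> y \<in> U)"

definition borelX :: "(nat \<Rightarrow> real) measure" where
  "borelX = sigma Xs {U. X_open U}"

definition inv_measures :: "(nat \<Rightarrow> real) measure set" where
  "inv_measures = {\<mu>. prob_space \<mu> \<and> sets \<mu> = sets borelX \<and> shift \<in> measurable \<mu> \<mu> \<and>
      (\<forall>A\<in>sets \<mu>. emeasure \<mu> (shift -` A \<inter> space \<mu>) = emeasure \<mu> A)}"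

definition alpha :: "((nat \<Rightarrow> real) \<Rightarrow> real) \<Rightarrow> real" where
  "alpha \<phi> = Inf ((\<lambda>\<mu>. integral\<^sup>L \<mu> \<phi>) ` inv_measures)"

definition Bset :: "(nat \<Rightarrow> real) \<Rightarrow> (nat \<Rightarrow> real) \<Rightarrow> nat \<Rightarrow> real \<Rightarrow> (nat \<Rightarrow> real) set" where
  "Bset x y n \<epsilon> = {z \<in> Xs. dX x z < \<epsilon> \<and> dX ((shift ^^ n) z) y < \<epsilon>}"

definition peierls :: "((nat \<Rightarrow> real) \<Rightarrow> real) \<Rightarrow> (nat \<Rightarrow> real) \<Rightarrow> (nat \<Rightarrow> real) \<Rightarrow> ereal" where
  "peierls \<phi> x y = Lim (at_right 0) (\<lambda>\<epsilon>::real.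
      liminf (\<lambda>n. INF z \<in> Bset x y n \<epsilon>. ereal (\<Sum>i<n. \<phi> ((shift ^^ i) z) - alpha \<phi>)))"

definition minimal3 :: "(real \<Rightarrow> real \<Rightarrow> real) \<Rightarrow> real \<Rightarrow> real \<Rightarrow> real \<Rightarrow> bool" where
  "minimal3 h u v w \<longleftrightarrow> u \<in> {0..1} \<and> v \<in> {0..1} \<and> w \<in> {0..1} \<and>
     (\<forall>y\<in>{0..1}. h u v + h v w \<le> h u y + h y w)"

definition classH :: "(real \<Rightarrow> real \<Rightarrow> real) \<Rightarrow> bool" where
  "classH h \<longleftrightarrow>
     (\<exists>C. C-lipschitz_on ({0..1} \<times> {0..1}) (\<lambda>(x, y). h x y)) \<and>
     (\<forall>\<xi>1 \<in> {0..1}. \<forall>\<xi>2 \<in> {0..1}. \<forall>\<eta>1 \<in> {0..1}. \<forall>\<eta>2 \<in> {0..1}.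
        \<xi>1 < \<xi>2 \<longrightarrow> \<eta>1 < \<eta>2 \<longrightarrow> h \<xi>1 \<eta>1 + h \<xi>2 \<eta>2 < h \<xi>1 \<eta>2 + h \<xi>2 \<eta>1) \<and>
     (\<forall>u v w u' w'. minimal3 h u v w \<longrightarrow> minimal3 h u' v w' \<longrightarrow> (u, w) \<noteq> (u', w') \<longrightarrow>
        (u - u') * (w - w') < 0)"

definition hstar :: "(real \<Rightarrow> real \<Rightarrow> real) \<Rightarrow> real" where
  "hstar h = (INF x \<in> {0..1}. h x x)"

definition mset_h :: "(real \<Rightarrow> real \<Rightarrow> real) \<Rightarrow> real set" where
  "mset_h h = {a \<in> {0..1}. h a a = hstar h}"

definition D1 :: "(real \<Rightarrow> real \<Rightarrow> real) \<Rightarrow> real \<Rightarrow> real \<Rightarrow> real" where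
  "D1 h x y = deriv (\<lambda>t. h t y) x"

definition D2 :: "(real \<Rightarrow> real \<Rightarrow> real) \<Rightarrow> real \<Rightarrow> real \<Rightarrow> real" where
  "D2 h x y = deriv (\<lambda>t. h x t) y"

definition C1_on :: "(real \<times> real) set \<Rightarrow> (real \<Rightarrow> real \<Rightarrow> real) \<Rightarrow> bool" where
  "C1_on U h \<longleftrightarrow>
     (\<forall>(x, y) \<in> U. (\<lambda>t. h t y) differentiable (at x) \<and> (\<lambda>t. h x t) differentiable (at y)) \<and>
     continuous_on U (\<lambda>(x, y). D1 h x y) \<and> continuous_on U (\<lambda>(x, y). D2 h x y)"

definition oint :: "real \<Rightarrow> real \<Rightarrow> (real \<Rightarrow> real) \<Rightarrow> real" where
  "oint a b f = (if a \<le> b then integral {a..b} f else - integral {b..a} f)"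

end

theory Submission
  imports Defs
begin


fun pc :: "(real \<Rightarrow> real \<Rightarrow> real) \<Rightarrow> real list \<Rightarrow> real" where
  "pc h (x # y # zs) = h x y + pc h (y # zs)"
| "pc h _ = 0"

lemma pc_append:
  assumes "xs \<noteq> []" "ys \<noteq> []"
  shows "pc h (xs @ ys) = pc h xs + h (last xs) (hd ys) + pc h ys"
  using assms
proof (induction xs)
  case Nil then show ?case by simp
next
  case (Cons x xs)
  show ?case
  proof (cases xs)
    case Nil
    then show ?thesis using Cons.prems by (cases ys) auto
  next
    case (Cons y ws)
    then show ?thesis using Cons.IH Cons.prems by auto
  qed
qed

lemma pc_map_upt:
  "pc h (map y [0..<Suc n]) = (\<Sum>i<n. h (y i) (y (Suc i)))"
proof (induction n)
  case 0 then show ?case by simp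
next
  case (Suc n)
  have "map y [0..<Suc (Suc n)] = map y [0..<Suc n] @ [y (Suc n)]" by simp
  then have "pc h (map y [0..<Suc (Suc n)]) = pc h (map y [0..<Suc n]) + h (y n) (y (Suc n))"
    using pc_append[of "map y [0..<Suc n]" "[y (Suc n)]" h] by (simp add: last_map)
  then show ?case using Suc by simp
qed

lemma cycle_lemma:
  fixes h :: "real \<Rightarrow> real \<Rightarrow> real" and hs :: real
  assumes monge: "\<And>x1 x2 y1 y2. x1 \<in> {0..1} \<Longrightarrow> x2 \<in> {0..1} \<Longrightarrow> y1 \<in> {0..1} \<Longrightarrow> y2 \<in> {0..1}
        \<Longrightarrow> x1 \<le> x2 \<Longrightarrow> y1 \<le> y2 \<Longrightarrow> h x1 y1 + h x2 y2 \<le> h x1 y2 + h x2 y1"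
    and hs: "\<And>x. x \<in> {0..1} \<Longrightarrow> hs \<le> h x x"
  shows "length ys = Suc n \<Longrightarrow> 1 \<le> n \<Longrightarrow> set ys \<subseteq> {0..1} \<Longrightarrow> hd ys = last ys \<Longrightarrow> real n * hs \<le> pc h ys"
proof (induction n arbitrary: ys rule: less_induct)
  case (less n)
  show ?case
  proof (cases "n = 1")
    case True
    then obtain x y where ys: "ys = [x, y]" using less.prems(1)
      by (metis Suc_length_conv One_nat_def length_0_conv)
    then show ?thesis using less.prems hs[of x] True by simp
  next
    case False
    then have n2: "n \<ge> 2" using less.prems(2) by simp
    obtain x I x' where ys: "ys = x # I @ [x']" and lI: "length I = n - 1"
    proof -
      obtain x zs where "ys = x # zs" using less.prems(1) by (cases ys) auto
      moreover have "zs \<noteq> []" using calculation less.prems(1) n2 by auto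
      ultimately show ?thesis using that[of x "butlast zs" "last zs"] less.prems(1)
        by (metis append_butlast_last_id length_butlast length_Cons diff_Suc_1)
    qed
    have xx: "x' = x" using less.prems(4) ys by simp
    have I0: "I \<noteq> []" using lI n2 by auto
    have inI: "set I \<subseteq> {0..1}" and x01: "x \<in> {0..1}" using less.prems(3) ys by auto
    define M where "M = Max (set I)"
    have MI: "M \<in> set I" using I0 M_def by simp
    have Mge: "\<And>u. u \<in> set I \<Longrightarrow> u \<le> M" using M_def by simp
    show ?thesis
    proof (cases "x \<le> M")
      case True
      obtain I1 I2 where I: "I = I1 @ M # I2" using MI split_list by metis
      define us where "us = x # I1"
      define vs where "vs = I2 @ [x]"
      have ys2: "ys = us @ M # vs" using ys xx I us_def vs_def by simp
      have us0: "us \<noteq> []" and vs0: "vs \<noteq> []" using us_def vs_def by auto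
      have p: "pc h ys = pc h us + h (last us) M + h M (hd vs) + pc h vs"
      proof -
        have "pc h ys = pc h us + h (last us) M + pc h (M # vs)"
          using pc_append[OF us0, of "M # vs" h] ys2 by simp
        moreover have "pc h (M # vs) = h M (hd vs) + pc h vs" using vs0 by (cases vs) auto
        ultimately show ?thesis by simp
      qed
      have p2: "pc h (us @ vs) = pc h us + h (last us) (hd vs) + pc h vs"
        using pc_append[OF us0 vs0] .
      have lu: "last us \<in> set ys" "hd vs \<in> set ys" using ys2 us0 vs0 by auto
      have leM: "last us \<le> M" "hd vs \<le> M"
        using lu Mge True unfolding ys by (auto simp: xx)
      have M01: "M \<in> {0..1}" using MI inI by auto
      have l01: "last us \<in> {0..1}" "hd vs \<in> {0..1}" using lu less.prems(3) by auto
      have mon: "h (last us) (hd vs) + h M M \<le> h (last us) M + h M (hd vs)"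
        using monge[OF l01(1) M01 l01(2) M01 leM] .
      have IH: "real (n - 1) * hs \<le> pc h (us @ vs)"
      proof (rule less.IH)
        show "n - 1 < n" using n2 by simp
        show "length (us @ vs) = Suc (n - 1)" using less.prems(1) ys2 n2 by simp
        show "1 \<le> n - 1" using n2 by simp
        show "set (us @ vs) \<subseteq> {0..1}" using less.prems(3) ys2 by auto
        show "hd (us @ vs) = last (us @ vs)" using us_def vs_def by simp
      qed
      have "real n * hs = real (n - 1) * hs + hs" using n2
        by (simp add: of_nat_diff algebra_simps)
      then show ?thesis using IH p p2 mon hs[OF M01] by linarith
    next
      case False
      define ws where "ws = I @ [hd I]"
      have p: "pc h ys = h x (hd I) + pc h I + h (last I) x"
      proof -
        have "pc h ys = pc h ([x] @ (I @ [x]))" using ys xx by simp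
        also have "\<dots> = h x (hd I) + pc h (I @ [x])" using pc_append[of "[x]" "I @ [x]" h] I0 by simp
        also have "pc h (I @ [x]) = pc h I + h (last I) x" using pc_append[OF I0, of "[x]" h] by simp
        finally show ?thesis by simp
      qed
      have p2: "pc h ws = pc h I + h (last I) (hd I)" using pc_append[OF I0, of "[hd I]" h] ws_def by simp
      have hl: "hd I \<in> set I" "last I \<in> set I" using I0 by auto
      have le: "hd I \<le> x" "last I \<le> x" using hl Mge False by force+
      have mon: "h (last I) (hd I) + h x x \<le> h (last I) x + h x (hd I)"
      proof -
        have "last I \<in> {0..1}" "hd I \<in> {0..1}" using hl inI by auto
        then show ?thesis using monge[of "last I" x "hd I" x] le x01 by blast
      qed
      have IH: "real (n - 1) * hs \<le> pc h ws"
      proof (rule less.IH)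
        show "n - 1 < n" using n2 by simp
        show "length ws = Suc (n - 1)" using lI n2 ws_def by simp
        show "1 \<le> n - 1" using n2 by simp
        show "set ws \<subseteq> {0..1}" using inI ws_def hl by auto
        show "hd ws = last ws" using ws_def I0 by simp
      qed
      have "real n * hs = real (n - 1) * hs + hs" using n2
        by (simp add: of_nat_diff algebra_simps)
      then show ?thesis using IH p p2 mon hs[OF x01] by linarith
    qed
  qed
qed



lemma Xs_mem: "x \<in> Xs \<Longrightarrow> x i \<in> {0..1}" by (simp add: Xs_def)

lemma dX_summable:
  assumes "x \<in> Xs" "y \<in> Xs"
  shows "summable (\<lambda>i. \<bar>x i - y i\<bar> / 2 ^ (i + 1))"
proof (rule summable_comparison_test'[where g="\<lambda>i. (1/2::real) ^ i" and N=0])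
  show "summable (\<lambda>i. (1/2::real) ^ i)" by simp
  fix n :: nat
  have "\<bar>x n - y n\<bar> \<le> 1" using Xs_mem[OF assms(1), of n] Xs_mem[OF assms(2), of n] by auto
  then have "\<bar>x n - y n\<bar> / 2 ^ (n + 1) \<le> 1 / 2 ^ (n+1)" by (simp add: divide_right_mono)
  also have "\<dots> \<le> 1 / 2 ^ n" by (rule divide_left_mono) auto
  also have "\<dots> = (1/2) ^ n" by (simp add: power_one_over)
  finally show "norm (\<bar>x n - y n\<bar> / 2 ^ (n + 1)) \<le> (1/2::real) ^ n" by simp
qed

lemma dX_nonneg: assumes "x \<in> Xs" "y \<in> Xs" shows "0 \<le> dX x y"
  unfolding dX_def using dX_summable[OF assms] by (intro suminf_nonneg) auto

lemma dX_term:
  assumes "x \<in> Xs" "y \<in> Xs"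
  shows "\<bar>x i - y i\<bar> \<le> 2 ^ (i + 1) * dX x y"
proof -
  have "(\<Sum>j\<in>{i}. \<bar>x j - y j\<bar> / 2 ^ (j + 1)) \<le> dX x y"
    unfolding dX_def by (rule sum_le_suminf[OF dX_summable[OF assms]]) auto
  then show ?thesis by (simp add: field_simps)
qed

lemma shift_Xs: "x \<in> Xs \<Longrightarrow> shift x \<in> Xs" by (simp add: Xs_def shift_def)

lemma dX_shift:
  assumes "x \<in> Xs" "y \<in> Xs"
  shows "dX (shift x) (shift y) \<le> 2 * dX x y"
proof -
  let ?f = "\<lambda>i. \<bar>x i - y i\<bar> / 2 ^ (i + 1)"
  have s: "summable ?f" by (rule dX_summable[OF assms])
  have "dX (shift x) (shift y) = (\<Sum>i. 2 * ?f (Suc i))"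
    unfolding dX_def shift_def by (simp add: field_simps)
  also have "\<dots> = 2 * (\<Sum>i. ?f (Suc i))"
    using summable_Suc_iff[THEN iffD2, OF s] by (subst suminf_mult) auto
  also have "(\<Sum>i. ?f (Suc i)) = dX x y - ?f 0" unfolding dX_def by (rule suminf_split_head[OF s])
  finally show ?thesis by simp
qed

lemma dX_agree:
  assumes "x \<in> Xs" "y \<in> Xs" "\<And>i. i < K \<Longrightarrow> x i = y i"
  shows "dX x y \<le> (1/2) ^ K"
proof -
  let ?f = "\<lambda>i. \<bar>x i - y i\<bar> / 2 ^ (i + 1)"
  have s: "summable ?f" by (rule dX_summable[OF assms(1,2)])
  have "dX x y = (\<Sum>n. ?f (n + K)) + (\<Sum>i<K. ?f i)"
    unfolding dX_def by (rule suminf_split_initial_segment[OF s])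
  also have "(\<Sum>i<K. ?f i) = 0" using assms(3) by simp
  also have "(\<Sum>n. ?f (n + K)) \<le> (\<Sum>n. (1/2)^(K+1) * (1/2) ^ n)"
  proof (rule suminf_le)
    fix n
    have "\<bar>x (n+K) - y (n+K)\<bar> \<le> 1" using Xs_mem[OF assms(1), of "n+K"] Xs_mem[OF assms(2), of "n+K"] by auto
    then have "?f (n + K) \<le> 1 / 2 ^ (n + K + 1)" by (simp add: divide_right_mono)
    also have "\<dots> = (1/2)^(K+1) * (1/2) ^ n" by (simp add: power_add power_one_over)
    finally show "?f (n + K) \<le> (1/2)^(K+1) * (1/2) ^ n" .
  next
    show "summable (\<lambda>n. ?f (n + K))" using summable_iff_shift[THEN iffD2, OF s] .
    show "summable (\<lambda>n. (1/2::real)^(K+1) * (1/2) ^ n)" by (intro summable_mult) simp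
  qed
  also have "(\<Sum>n. (1/2::real)^(K+1) * (1/2) ^ n) = (1/2)^K"
    by (subst suminf_mult) (simp_all add: suminf_geometric)
  finally show ?thesis by simp
qed

lemma dX_eq0: "dX x x = 0" by (simp add: dX_def)

lemma shift_pow: "(shift ^^ n) z = (\<lambda>k. z (k + n))"
  by (induction n arbitrary: z) (auto simp: shift_def funpow_Suc_right)

lemma Xs_sets: "{U. X_open U} \<subseteq> Pow Xs" by (auto simp: X_open_def)

lemma space_borelX: "space borelX = Xs"
  unfolding borelX_def by (simp add: space_measure_of_conv)

lemma X_open_sets: "X_open U \<Longrightarrow> U \<in> sets borelX"
  unfolding borelX_def by (rule in_measure_of[OF Xs_sets]) simp

lemma meas_lip:
  fixes f :: "(nat \<Rightarrow> real) \<Rightarrow> real"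
  assumes L: "0 \<le> L" and lip: "\<And>x y. x \<in> Xs \<Longrightarrow> y \<in> Xs \<Longrightarrow> \<bar>f x - f y\<bar> \<le> L * dX x y"
  shows "f \<in> borel_measurable borelX"
proof (rule borel_measurableI)
  fix S :: "real set" assume S: "open S"
  have "X_open (f -` S \<inter> Xs)"
    unfolding X_open_def
  proof (intro conjI ballI)
    show "f -` S \<inter> Xs \<subseteq> Xs" by auto
    fix x assume x: "x \<in> f -` S \<inter> Xs"
    then obtain e where e: "e > 0" "ball (f x) e \<subseteq> S" using S openE by blast
    show "\<exists>e>0. \<forall>y\<in>Xs. dX x y < e \<longrightarrow> y \<in> f -` S \<inter> Xs"
    proof (intro exI[of _ "e / (L + 1)"] conjI ballI impI)
      show "e / (L+1) > 0" using e L by simp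
      fix y assume y: "y \<in> Xs" "dX x y < e / (L + 1)"
      have "\<bar>f x - f y\<bar> \<le> L * dX x y" using lip x y by auto
      also have "\<dots> \<le> (L + 1) * dX x y" using dX_nonneg[of x y] x y by (simp add: algebra_simps)
      also have "\<dots> < e" using y L by (simp add: field_simps)
      finally have "f y \<in> ball (f x) e" by (simp add: dist_real_def)
      then show "y \<in> f -` S \<inter> Xs" using e y by auto
    qed
  qed
  then show "f -` S \<inter> space borelX \<in> sets borelX" using X_open_sets space_borelX by simp
qed

lemma shift_meas: "shift \<in> measurable borelX borelX"
proof -
  have "shift \<in> measurable borelX (measure_of Xs {U. X_open U} (\<lambda>x. 0))"
  proof (rule measurable_measure_of[OF Xs_sets])
    show "shift \<in> space borelX \<rightarrow> Xs" using shift_Xs space_borelX by auto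
    fix U assume "U \<in> {U. X_open U}"
    then have U: "X_open U" by simp
    have "X_open (shift -` U \<inter> Xs)"
      unfolding X_open_def
    proof (intro conjI ballI)
      show "shift -` U \<inter> Xs \<subseteq> Xs" by auto
      fix x assume x: "x \<in> shift -` U \<inter> Xs"
      then obtain e where e: "e > 0" "\<forall>y\<in>Xs. dX (shift x) y < e \<longrightarrow> y \<in> U"
        using U unfolding X_open_def by blast
      show "\<exists>e>0. \<forall>y\<in>Xs. dX x y < e \<longrightarrow> y \<in> shift -` U \<inter> Xs"
      proof (intro exI[of _ "e / 2"] conjI ballI impI)
        show "e/2 > 0" using e by simp
        fix y assume y: "y \<in> Xs" "dX x y < e / 2"
        have "dX (shift x) (shift y) < e" using dX_shift[of x y] x y by auto
        then show "y \<in> shift -` U \<inter> Xs" using e shift_Xs[OF y(1)] y by auto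
      qed
    qed
    then show "shift -` U \<inter> space borelX \<in> sets borelX" using X_open_sets space_borelX by simp
  qed
  then show ?thesis unfolding borelX_def by simp
qed



lemma classH_lip:
  assumes "classH h"
  obtains C where "0 \<le> C" "\<And>x x' y y'. x \<in> {0..1} \<Longrightarrow> x' \<in> {0..1} \<Longrightarrow> y \<in> {0..1} \<Longrightarrow> y' \<in> {0..1}
     \<Longrightarrow> \<bar>h x y - h x' y'\<bar> \<le> C * (\<bar>x - x'\<bar> + \<bar>y - y'\<bar>)"
proof -
  obtain C where C: "C-lipschitz_on ({0..1} \<times> {0..1}) (\<lambda>(x, y). h x y)"
    using assms unfolding classH_def by blast
  have C0: "0 \<le> C" using lipschitz_on_nonneg[OF C] .
  show ?thesis
  proof (rule that[OF C0])
    fix x x' y y' :: real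
    assume xy: "x \<in> {0..1}" "x' \<in> {0..1}" "y \<in> {0..1}" "y' \<in> {0..1}"
    have "dist ((\<lambda>(x, y). h x y) (x, y)) ((\<lambda>(x, y). h x y) (x', y')) \<le> C * dist (x, y) (x', y')"
      by (rule lipschitz_onD[OF C]) (use xy in auto)
    moreover have "dist (x, y) (x', y') \<le> \<bar>x - x'\<bar> + \<bar>y - y'\<bar>"
    proof -
      have "dist (x, y) (x', y') = sqrt ((x - x')\<^sup>2 + (y - y')\<^sup>2)"
        by (simp add: dist_Pair_Pair dist_real_def)
      also have "\<dots> \<le> sqrt ((\<bar>x - x'\<bar> + \<bar>y - y'\<bar>)\<^sup>2)"
        by (rule real_sqrt_le_mono) (simp add: power2_eq_square algebra_simps)
      also have "\<dots> = \<bar>x - x'\<bar> + \<bar>y - y'\<bar>" by simp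
      finally show ?thesis .
    qed
    ultimately show "\<bar>h x y - h x' y'\<bar> \<le> C * (\<bar>x - x'\<bar> + \<bar>y - y'\<bar>)"
      using C0 by (simp add: dist_real_def) (meson mult_left_mono order_trans)
  qed
qed

lemma classH_bound:
  assumes "classH h"
  obtains B where "\<And>x y. x \<in> {0..1} \<Longrightarrow> y \<in> {0..1} \<Longrightarrow> \<bar>h x y\<bar> \<le> B"
proof -
  obtain C where C: "0 \<le> C" "\<And>x x' y y'. x \<in> {0..1} \<Longrightarrow> x' \<in> {0..1} \<Longrightarrow> y \<in> {0..1} \<Longrightarrow> y' \<in> {0..1}
     \<Longrightarrow> \<bar>h x y - h x' y'\<bar> \<le> C * (\<bar>x - x'\<bar> + \<bar>y - y'\<bar>)" using classH_lip[OF assms] by blast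
  show ?thesis
  proof (rule that[of "\<bar>h 0 0\<bar> + 2 * C"])
    fix x y :: real assume xy: "x \<in> {0..1}" "y \<in> {0..1}"
    have "\<bar>h x y - h 0 0\<bar> \<le> C * (\<bar>x - 0\<bar> + \<bar>y - 0\<bar>)" by (rule C(2)) (use xy in auto)
    also have "\<dots> \<le> C * 2" using xy C(1) by (intro mult_left_mono) auto
    finally show "\<bar>h x y\<bar> \<le> \<bar>h 0 0\<bar> + 2 * C" by simp
  qed
qed

lemma hstar_le:
  assumes "classH h" "x \<in> {0..1}"
  shows "hstar h \<le> h x x"
proof -
  obtain B where B: "\<And>x y. x \<in> {0..1} \<Longrightarrow> y \<in> {0..1} \<Longrightarrow> \<bar>h x y\<bar> \<le> B"
    using classH_bound[OF assms(1)] by blast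
  have "bdd_below ((\<lambda>x. h x x) ` {0..1})"
    by (rule bdd_belowI[of _ "-B"]) (use B in force)
  then show ?thesis unfolding hstar_def by (rule cINF_lower) (rule assms(2))
qed

lemma classH_monge:
  assumes "classH h" "x1 \<in> {0..1}" "x2 \<in> {0..1}" "y1 \<in> {0..1}" "y2 \<in> {0..1}" "x1 \<le> x2" "y1 \<le> y2"
  shows "h x1 y1 + h x2 y2 \<le> h x1 y2 + h x2 y1"
proof (cases "x1 < x2 \<and> y1 < y2")
  case True
  then show ?thesis using assms unfolding classH_def by (meson less_imp_le)
next
  case False
  then have "x1 = x2 \<or> y1 = y2" using assms by auto
  then show ?thesis by auto
qed

lemma cycle_H:
  assumes "classH h" "length ys = Suc n" "1 \<le> n" "set ys \<subseteq> {0..1}" "hd ys = last ys"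
  shows "real n * hstar h \<le> pc h ys"
  by (rule cycle_lemma[OF classH_monge[OF assms(1)] hstar_le[OF assms(1)] assms(2-5)])

lemma path_bound:
  assumes "classH h" "x \<in> Xs"
  shows "real (Suc n) * hstar h \<le> (\<Sum>i<n. h (x i) (x (Suc i))) + h (x n) (x 0)"
proof -
  let ?ys = "map x [0..<Suc n] @ [x 0]"
  have "real (Suc n) * hstar h \<le> pc h ?ys"
  proof (rule cycle_H[OF assms(1)])
    show "hd ?ys = last ?ys" by (simp add: upt_conv_Cons del: upt_Suc)
  qed (use assms(2) Xs_mem in auto)
  also have "pc h ?ys = pc h (map x [0..<Suc n]) + h (x n) (x 0)"
    by (subst pc_append) (auto simp: last_map)
  finally show ?thesis unfolding pc_map_upt .
qed

lemma alpha_eq: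
  assumes hH: "classH h" and a: "a \<in> {0..1}" "h a a = hstar h"
  shows "alpha (\<lambda>x. h (x 0) (x 1)) = hstar h"
proof -
  obtain C where C: "0 \<le> C" "\<And>x x' y y'. x \<in> {0..1} \<Longrightarrow> x' \<in> {0..1} \<Longrightarrow> y \<in> {0..1} \<Longrightarrow> y' \<in> {0..1}
     \<Longrightarrow> \<bar>h x y - h x' y'\<bar> \<le> C * (\<bar>x - x'\<bar> + \<bar>y - y'\<bar>)" using classH_lip[OF hH] by blast
  obtain B where B: "\<And>x y. x \<in> {0..1} \<Longrightarrow> y \<in> {0..1} \<Longrightarrow> \<bar>h x y\<bar> \<le> B"
    using classH_bound[OF hH] by blast
  define hs where "hs = hstar h"
  define \<phi> where "\<phi> i = (\<lambda>x::nat\<Rightarrow>real. h (x i) (x (Suc i)))" for i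
  have \<phi>meas: "\<phi> i \<in> borel_measurable borelX" for i
  proof (rule meas_lip[where L="C * (2 ^ (i+1) + 2 ^ (Suc i + 1))"])
    show "0 \<le> C * (2 ^ (i+1) + 2 ^ (Suc i + 1))" using C(1) by simp
    fix x y assume xy: "x \<in> Xs" "y \<in> Xs"
    have "\<bar>\<phi> i x - \<phi> i y\<bar> \<le> C * (\<bar>x i - y i\<bar> + \<bar>x (Suc i) - y (Suc i)\<bar>)"
      unfolding \<phi>_def by (rule C(2)) (use xy Xs_mem in auto)
    also have "\<dots> \<le> C * (2 ^ (i+1) * dX x y + 2 ^ (Suc i + 1) * dX x y)"
      by (intro mult_left_mono add_mono dX_term xy C(1))
    finally show "\<bar>\<phi> i x - \<phi> i y\<bar> \<le> C * (2 ^ (i+1) + 2 ^ (Suc i + 1)) * dX x y"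
      by (simp add: algebra_simps)
  qed
  have \<phi>bd: "x \<in> Xs \<Longrightarrow> \<bar>\<phi> i x\<bar> \<le> B" for x i unfolding \<phi>_def using B Xs_mem by blast
  define S where "S = (\<lambda>\<mu>. integral\<^sup>L \<mu> (\<lambda>x. h (x 0) (x 1))) ` inv_measures"
  have lower: "hs \<le> integral\<^sup>L \<mu> (\<phi> 0)" if \<mu>: "\<mu> \<in> inv_measures" for \<mu>
  proof -
    have ps: "prob_space \<mu>" and sets: "sets \<mu> = sets borelX" and sm: "shift \<in> measurable \<mu> \<mu>"
      and inv: "\<And>A. A \<in> sets \<mu> \<Longrightarrow> emeasure \<mu> (shift -` A \<inter> space \<mu>) = emeasure \<mu> A"
      using \<mu> unfolding inv_measures_def by auto
    interpret prob_space \<mu> by (rule ps)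
    have sp: "space \<mu> = Xs" using sets_eq_imp_space_eq[OF sets] space_borelX by simp
    have meas: "\<phi> i \<in> borel_measurable \<mu>" for i
      by (subst measurable_cong_sets[OF sets refl]) (rule \<phi>meas)
    have int: "integrable \<mu> (\<phi> i)" for i
      by (rule integrable_const_bound[where B=B]) (use \<phi>bd sp meas in auto)
    have distr: "distr \<mu> \<mu> shift = \<mu>"
      by (rule measure_eqI) (auto simp: emeasure_distr[OF sm] inv)
    have step: "integral\<^sup>L \<mu> (\<phi> (Suc i)) = integral\<^sup>L \<mu> (\<phi> i)" for i
    proof -
      have "integral\<^sup>L \<mu> (\<phi> i) = integral\<^sup>L (distr \<mu> \<mu> shift) (\<phi> i)" using distr by simp
      also have "\<dots> = integral\<^sup>L \<mu> (\<lambda>x. \<phi> i (shift x))" by (rule integral_distr[OF sm meas])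
      also have "(\<lambda>x. \<phi> i (shift x)) = \<phi> (Suc i)" by (simp add: \<phi>_def shift_def)
      finally show ?thesis by simp
    qed
    have same: "integral\<^sup>L \<mu> (\<phi> i) = integral\<^sup>L \<mu> (\<phi> 0)" for i
      by (induction i) (use step in auto)
    show ?thesis
    proof (rule ccontr)
      assume "\<not> hs \<le> integral\<^sup>L \<mu> (\<phi> 0)"
      then have gap: "integral\<^sup>L \<mu> (\<phi> 0) < hs" by simp
      obtain n :: nat where n: "(B - hs + 1) / (hs - integral\<^sup>L \<mu> (\<phi> 0)) < real n"
        using reals_Archimedean2 by blast
      have pt: "real (Suc n) * hs - B \<le> (\<Sum>i<n. \<phi> i x)" if x: "x \<in> Xs" for x
        using path_bound[OF hH x, of n] B[of "x n" "x 0"] Xs_mem[OF x] unfolding hs_def \<phi>_def by auto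
      have "real (Suc n) * hs - B = integral\<^sup>L \<mu> (\<lambda>x. real (Suc n) * hs - B)" by (simp add: prob_space)
      also have "\<dots> \<le> integral\<^sup>L \<mu> (\<lambda>x. \<Sum>i<n. \<phi> i x)"
        by (rule integral_mono) (use int pt sp in auto)
      also have "\<dots> = (\<Sum>i<n. integral\<^sup>L \<mu> (\<phi> i))" using int by simp
      also have "\<dots> = real n * integral\<^sup>L \<mu> (\<phi> 0)"
        by (subst sum.cong[OF refl same]) simp
      finally have "real n * (hs - integral\<^sup>L \<mu> (\<phi> 0)) \<le> B - hs" by (simp add: algebra_simps)
      moreover have "B - hs + 1 < real n * (hs - integral\<^sup>L \<mu> (\<phi> 0))"
        using n gap by (simp add: field_simps)
      ultimately show False by simp
    qed
  qed
  define c where "c = (\<lambda>_::nat. a)"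
  have cX: "c \<in> Xs" using a by (simp add: Xs_def c_def)
  define \<mu>0 where "\<mu>0 = return borelX c"
  have \<mu>0: "\<mu>0 \<in> inv_measures"
    unfolding inv_measures_def
  proof (intro CollectI conjI ballI)
    show "prob_space \<mu>0" unfolding \<mu>0_def by (rule prob_space_return) (simp add: space_borelX cX)
    show "sets \<mu>0 = sets borelX" by (simp add: \<mu>0_def)
    show "shift \<in> measurable \<mu>0 \<mu>0" unfolding \<mu>0_def using shift_meas by simp
    fix A assume A: "A \<in> sets \<mu>0"
    have sc: "shift c = c" by (simp add: c_def shift_def)
    have "shift -` A \<inter> space \<mu>0 \<in> sets borelX"
      using measurable_sets[OF shift_meas, of A] A by (simp add: \<mu>0_def)
    then show "emeasure \<mu>0 (shift -` A \<inter> space \<mu>0) = emeasure \<mu>0 A"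
      using A by (simp add: \<mu>0_def sc space_borelX cX indicator_def)
  qed
  have v0: "integral\<^sup>L \<mu>0 (\<lambda>x. h (x 0) (x 1)) = hs"
  proof -
    have "integral\<^sup>L \<mu>0 (\<phi> 0) = \<phi> 0 c"
      unfolding \<mu>0_def by (rule integral_return) (use cX space_borelX \<phi>meas in auto)
    then show ?thesis using a by (simp add: \<phi>_def c_def hs_def)
  qed
  have "Inf S = hs"
  proof (rule cInf_eq_minimum)
    show "hs \<in> S" unfolding S_def using \<mu>0 v0 by force
    fix y assume "y \<in> S"
    then obtain \<mu> where "\<mu> \<in> inv_measures" "y = integral\<^sup>L \<mu> (\<lambda>x. h (x 0) (x 1))" unfolding S_def by blast
    then show "hs \<le> y" using lower[of \<mu>] by (simp add: \<phi>_def)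
  qed
  then show ?thesis unfolding alpha_def S_def hs_def by simp
qed



lemma oint_deriv:
  fixes p q s :: real and f :: "real \<Rightarrow> real"
  assumes f: "continuous_on (closed_segment p q) f" and s: "s \<in> closed_segment p q"
  shows "((\<lambda>s. oint p s f) has_real_derivative f s) (at s within closed_segment p q)"
proof (cases "p \<le> q")
  case True
  then have seg: "closed_segment p q = {p..q}" by (simp add: closed_segment_eq_real_ivl)
  have d: "((\<lambda>u. integral {p..u} f) has_real_derivative f s) (at s within {p..q})"
    by (rule integral_has_real_derivative) (use f s seg in auto)
  show ?thesis unfolding seg
    by (rule has_field_derivative_transform_within[OF d zero_less_one]) (use s seg in \<open>auto simp: oint_def\<close>)
next
  case False
  then have seg: "closed_segment p q = {q..p}" by (simp add: closed_segment_eq_real_ivl)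
  have fi: "f integrable_on {q..p}" using f seg integrable_continuous_real by auto
  have d: "((\<lambda>u. integral {q..u} f - integral {q..p} f) has_real_derivative f s) (at s within {q..p})"
    using integral_has_real_derivative[of q p f s] f s seg
    by (auto intro!: derivative_eq_intros)
  have eq: "integral {q..u} f - integral {q..p} f = oint p u f" if u: "u \<in> {q..p}" for u
  proof -
    have "integral {q..u} f + integral {u..p} f = integral {q..p} f"
      by (rule Henstock_Kurzweil_Integration.integral_combine) (use u fi in auto)
    moreover have "oint p u f = - integral {u..p} f"
      using u by (cases "u = p") (auto simp: oint_def)
    ultimately show ?thesis by simp
  qed
  show ?thesis unfolding seg
    by (rule has_field_derivative_transform_within[OF d zero_less_one]) (use s seg eq in auto)
qed

lemma oint_same: "oint p p f = 0" by (simp add: oint_def)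

lemma seg_dist:
  fixes x s t :: real
  assumes "t \<in> closed_segment x s"
  shows "\<bar>t - x\<bar> \<le> \<bar>s - x\<bar>"
  using assms by (auto simp: closed_segment_eq_real_ivl split: if_splits)

lemma estimate:
  fixes k Dk :: "real \<Rightarrow> real \<Rightarrow> real" and p q :: real and W :: "(real \<times> real) set"
  assumes W: "open W" and diag: "\<And>x. x \<in> closed_segment p q \<Longrightarrow> (x, x) \<in> W"
    and der: "\<And>x s. (x, s) \<in> W \<Longrightarrow> (k x has_real_derivative Dk x s) (at s)"
    and cont: "continuous_on W (\<lambda>(x, s). Dk x s)"
    and e: "0 < e"
  shows "\<exists>\<eta>>0. \<forall>x\<in>closed_segment p q. \<forall>s\<in>closed_segment p q. \<bar>s - x\<bar> < \<eta> \<longrightarrow>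
     \<bar>k x s - k x x - (oint p s (\<lambda>t. Dk t t) - oint p x (\<lambda>t. Dk t t))\<bar> \<le> e * \<bar>s - x\<bar>"
proof -
  define seg where "seg = closed_segment p q"
  define \<Phi> where "\<Phi> s = oint p s (\<lambda>t. Dk t t)" for s
  define D where "D = (\<lambda>x. (x, x)) ` seg"
  have cD: "compact D" unfolding D_def seg_def
    by (intro compact_continuous_image continuous_intros compact_segment)
  obtain r where r: "0 < r" "\<And>z. z \<in> D \<Longrightarrow> \<exists>G\<in>{W}. ball z r \<subseteq> G"
    by (rule Heine_Borel_lemma[OF cD, of "{W}"]) (use diag W in \<open>auto simp: D_def seg_def\<close>)
  have rW: "\<And>x. x \<in> seg \<Longrightarrow> ball (x, x) r \<subseteq> W" using r(2) unfolding D_def by auto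
  define K where "K = (seg \<times> seg) \<inter> {z. \<bar>snd z - fst z\<bar> \<le> r / 2}"
  have cK: "compact K" unfolding K_def seg_def
    by (intro compact_Int_closed compact_Times compact_segment closed_Collect_le continuous_intros)
  have KW: "K \<subseteq> W"
  proof
    fix z assume "z \<in> K"
    then obtain x s where z: "z = (x, s)" "x \<in> seg" "s \<in> seg" "\<bar>s - x\<bar> \<le> r/2"
      unfolding K_def by auto
    have "\<bar>x - s\<bar> < r" using z r(1) by (simp add: abs_minus_commute)
    then have "dist (x, x) (x, s) < r" by (simp add: dist_Pair_Pair dist_real_def)
    then show "z \<in> W" using rW[OF z(2)] z(1) by auto
  qed
  have ucK: "uniformly_continuous_on K (\<lambda>(x, s). Dk x s)"
    by (rule compact_uniformly_continuous[OF continuous_on_subset[OF cont KW] cK])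
  obtain d where d: "d > 0" "\<And>z z'. z \<in> K \<Longrightarrow> z' \<in> K \<Longrightarrow> dist z' z < d \<Longrightarrow>
       dist ((\<lambda>(x, s). Dk x s) z') ((\<lambda>(x, s). Dk x s) z) < e"
    using ucK e unfolding uniformly_continuous_on_def by metis
  have diagK: "(t, t) \<in> K" if "t \<in> seg" for t using that r(1) by (simp add: K_def)
  have cdiag: "continuous_on seg (\<lambda>t. Dk t t)"
  proof -
    have "continuous_on seg ((\<lambda>(x, s). Dk x s) \<circ> (\<lambda>t. (t, t)))"
      by (rule continuous_on_compose[OF _ continuous_on_subset[OF cont]])
         (use diag in \<open>auto simp: seg_def intro!: continuous_intros\<close>)
    then show ?thesis by (simp add: o_def)
  qed
  have \<Phi>d: "(\<Phi> has_real_derivative Dk t t) (at t within seg)" if "t \<in> seg" for t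
    unfolding \<Phi>_def seg_def by (rule oint_deriv) (use cdiag that seg_def in auto)
  show ?thesis
  proof (intro exI[of _ "min d (r/2)"] conjI ballI impI)
    show "0 < min d (r/2)" using d r by simp
    fix x s assume x: "x \<in> closed_segment p q" and s: "s \<in> closed_segment p q"
      and xs: "\<bar>s - x\<bar> < min d (r/2)"
    define T where "T = closed_segment x s"
    have Tseg: "T \<subseteq> seg" unfolding T_def seg_def
      by (rule closed_segment_subset) (use x s in auto)
    have bnd: "norm ((\<lambda>t. k x t - \<Phi> t) s - (\<lambda>t. k x t - \<Phi> t) x) \<le> e * norm (s - x)"
    proof (rule field_differentiable_bound[where f'="\<lambda>t. Dk x t - Dk t t"])
      show "convex T" unfolding T_def by simp
      show "s \<in> T" "x \<in> T" unfolding T_def by auto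
      fix t assume t: "t \<in> T"
      have tx: "\<bar>t - x\<bar> \<le> \<bar>s - x\<bar>" using t seg_dist unfolding T_def by blast
      have tseg: "t \<in> seg" using t Tseg by auto
      have xK: "(x, t) \<in> K" using tx xs tseg x by (auto simp: K_def seg_def)
      have "\<bar>x - t\<bar> < d" using tx xs by (simp add: abs_minus_commute)
      then have "dist (x, t) (t, t) < d" by (simp add: dist_Pair_Pair dist_real_def)
      then have "dist (Dk x t) (Dk t t) < e" using d(2)[OF diagK[OF tseg] xK] by simp
      then show "norm (Dk x t - Dk t t) \<le> e" by (simp add: dist_real_def)
      have "(k x has_real_derivative Dk x t) (at t)" using der xK KW by auto
      then have "(k x has_real_derivative Dk x t) (at t within T)" by (rule has_field_derivative_at_within)
      moreover have "(\<Phi> has_real_derivative Dk t t) (at t within T)"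
        by (rule DERIV_subset[OF \<Phi>d[OF tseg] Tseg])
      ultimately show "((\<lambda>t. k x t - \<Phi> t) has_real_derivative Dk x t - Dk t t) (at t within T)"
        by (intro derivative_eq_intros) auto
    qed
    then show "\<bar>k x s - k x x - (oint p s (\<lambda>t. Dk t t) - oint p x (\<lambda>t. Dk t t))\<bar> \<le> e * \<bar>s - x\<bar>"
      by (simp add: \<Phi>_def algebra_simps)
  qed
qed



definition ych :: "real \<Rightarrow> real \<Rightarrow> nat \<Rightarrow> nat \<Rightarrow> real" where
  "ych p q m j = p + real (min j m) * (q - p) / real m"

lemma ych_seg:
  assumes "m \<ge> 1" shows "ych p q m j \<in> closed_segment p q"
proof -
  define u where "u = real (min j m) / real m"
  have u: "0 \<le> u" "u \<le> 1" using assms by (auto simp: u_def)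
  have "ych p q m j = (1 - u) *\<^sub>R p + u *\<^sub>R q" using assms by (simp add: ych_def u_def field_simps)
  then show ?thesis using u in_segment(1) by blast
qed

lemma ych_0: "ych p q m 0 = p" by (simp add: ych_def)
lemma ych_ge: "m \<ge> 1 \<Longrightarrow> j \<ge> m \<Longrightarrow> ych p q m j = q" by (simp add: ych_def)
lemma ych_step: "j < m \<Longrightarrow> ych p q m (Suc j) - ych p q m j = (q - p) / real m"
  by (simp add: ych_def min_def field_simps)

lemma chain_sums:
  fixes k :: "real \<Rightarrow> real \<Rightarrow> real" and \<Phi> :: "real \<Rightarrow> real"
  assumes est: "\<forall>x\<in>closed_segment p q. \<forall>s\<in>closed_segment p q. \<bar>s - x\<bar> < \<eta> \<longrightarrow>
     \<bar>k x s - k x x - (\<Phi> s - \<Phi> x)\<bar> \<le> e * \<bar>s - x\<bar>"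
    and m: "m \<ge> 1" "\<bar>q - p\<bar> / real m < \<eta>" and \<Phi>p: "\<Phi> p = 0"
  shows "\<bar>(\<Sum>j<m. k (ych p q m j) (ych p q m (Suc j)) - k (ych p q m j) (ych p q m j)) - \<Phi> q\<bar> \<le> e * \<bar>q - p\<bar>"
    and "\<bar>(\<Sum>j<m. k (ych p q m (Suc j)) (ych p q m j) - k (ych p q m (Suc j)) (ych p q m (Suc j))) + \<Phi> q\<bar> \<le> e * \<bar>q - p\<bar>"
proof -
  let ?y = "ych p q m"
  have dy: "\<bar>?y (Suc j) - ?y j\<bar> = \<bar>q - p\<bar> / real m" if "j < m" for j
    using ych_step[OF that, of p q] m by simp
  have tel: "(\<Sum>j<m. \<Phi> (?y (Suc j)) - \<Phi> (?y j)) = \<Phi> q"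
    using sum_lessThan_telescope[of "\<lambda>j. \<Phi> (?y j)" m] ych_0 ych_ge[OF m(1) order_refl] \<Phi>p by simp
  have mm: "(\<Sum>j<m. e * (\<bar>q - p\<bar> / real m)) = e * \<bar>q - p\<bar>" using m by simp
  have t1: "\<bar>k (?y j) (?y (Suc j)) - k (?y j) (?y j) - (\<Phi> (?y (Suc j)) - \<Phi> (?y j))\<bar> \<le> e * (\<bar>q - p\<bar> / real m)"
    if "j < m" for j
  proof -
    have A: "?y j \<in> closed_segment p q" "?y (Suc j) \<in> closed_segment p q" using ych_seg[OF m(1)] by auto
    have B: "\<bar>?y (Suc j) - ?y j\<bar> < \<eta>" using dy[OF that] m(2) by simp
    show ?thesis using est[rule_format, OF A B] dy[OF that] by simp
  qed
  have t2: "\<bar>k (?y (Suc j)) (?y j) - k (?y (Suc j)) (?y (Suc j)) - (\<Phi> (?y j) - \<Phi> (?y (Suc j)))\<bar> \<le> e * (\<bar>q - p\<bar> / real m)"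
    if "j < m" for j
  proof -
    have d: "\<bar>?y j - ?y (Suc j)\<bar> = \<bar>q - p\<bar> / real m" using dy[OF that] by (simp add: abs_minus_commute)
    have A: "?y j \<in> closed_segment p q" "?y (Suc j) \<in> closed_segment p q" using ych_seg[OF m(1)] by auto
    have B: "\<bar>?y j - ?y (Suc j)\<bar> < \<eta>" using d m(2) by simp
    show ?thesis using est[rule_format, OF A(2) A(1) B] d by simp
  qed
  have "\<bar>(\<Sum>j<m. k (?y j) (?y (Suc j)) - k (?y j) (?y j)) - \<Phi> q\<bar>
      = \<bar>\<Sum>j<m. k (?y j) (?y (Suc j)) - k (?y j) (?y j) - (\<Phi> (?y (Suc j)) - \<Phi> (?y j))\<bar>"
    by (simp add: tel[symmetric] sum_subtractf)
  also have "\<dots> \<le> (\<Sum>j<m. \<bar>k (?y j) (?y (Suc j)) - k (?y j) (?y j) - (\<Phi> (?y (Suc j)) - \<Phi> (?y j))\<bar>)"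
    by (rule sum_abs)
  also have "\<dots> \<le> (\<Sum>j<m. e * (\<bar>q - p\<bar> / real m))" by (rule sum_mono) (use t1 in auto)
  finally show "\<bar>(\<Sum>j<m. k (?y j) (?y (Suc j)) - k (?y j) (?y j)) - \<Phi> q\<bar> \<le> e * \<bar>q - p\<bar>" using mm by simp
  have tel2: "(\<Sum>j<m. \<Phi> (?y j) - \<Phi> (?y (Suc j))) = - \<Phi> q"
    using sum_lessThan_telescope'[of "\<lambda>j. \<Phi> (?y j)" m] ych_0 ych_ge[OF m(1) order_refl] \<Phi>p by simp
  have "\<bar>(\<Sum>j<m. k (?y (Suc j)) (?y j) - k (?y (Suc j)) (?y (Suc j))) + \<Phi> q\<bar>
      = \<bar>\<Sum>j<m. k (?y (Suc j)) (?y j) - k (?y (Suc j)) (?y (Suc j)) - (\<Phi> (?y j) - \<Phi> (?y (Suc j)))\<bar>"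
    by (simp add: tel[symmetric] sum_subtractf sum.distrib algebra_simps)
  also have "\<dots> \<le> (\<Sum>j<m. \<bar>k (?y (Suc j)) (?y j) - k (?y (Suc j)) (?y (Suc j)) - (\<Phi> (?y j) - \<Phi> (?y (Suc j)))\<bar>)"
    by (rule sum_abs)
  also have "\<dots> \<le> (\<Sum>j<m. e * (\<bar>q - p\<bar> / real m))" by (rule sum_mono) (use t2 in auto)
  finally show "\<bar>(\<Sum>j<m. k (?y (Suc j)) (?y j) - k (?y (Suc j)) (?y (Suc j))) + \<Phi> q\<bar> \<le> e * \<bar>q - p\<bar>"
    using mm by simp
qed

lemma exists_m:
  fixes \<eta> :: real assumes "\<eta> > 0" obtains m :: nat where "m \<ge> 1" "\<bar>q - p\<bar> / real m < \<eta>"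
proof -
  obtain m :: nat where m: "\<bar>q - p\<bar> / \<eta> < real m" using reals_Archimedean2 by blast
  have "m \<ge> 1" using m assms
    by (metis (mono_tags) abs_ge_zero divide_nonneg_pos less_one not_le of_nat_0 not_less)
  moreover have "\<bar>q - p\<bar> / real m < \<eta>"
    using m assms calculation by (simp add: field_simps)
  ultimately show ?thesis using that by blast
qed

locale setting =
  fixes h :: "real \<Rightarrow> real \<Rightarrow> real" and p q :: real and U :: "(real \<times> real) set"
  assumes hH: "classH h"
    and U: "open U" "\<And>x. x \<in> closed_segment p q \<Longrightarrow> (x, x) \<in> U" and C1: "C1_on U h"
    and sub: "closed_segment p q \<subseteq> mset_h h"
begin

lemma seg01: "x \<in> closed_segment p q \<Longrightarrow> x \<in> {0..1}" using sub by (auto simp: mset_h_def)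
lemma seg_h: "x \<in> closed_segment p q \<Longrightarrow> h x x = hstar h" using sub by (auto simp: mset_h_def)

lemma est2:
  assumes "e > 0"
  shows "\<exists>\<eta>>0. \<forall>x\<in>closed_segment p q. \<forall>s\<in>closed_segment p q. \<bar>s - x\<bar> < \<eta> \<longrightarrow>
     \<bar>h x s - h x x - (oint p s (\<lambda>t. D2 h t t) - oint p x (\<lambda>t. D2 h t t))\<bar> \<le> e * \<bar>s - x\<bar>"
proof (rule estimate[where k=h and Dk="D2 h", OF U(1) U(2) _ _ assms])
  fix x s assume "(x, s) \<in> U"
  then have "(\<lambda>t. h x t) differentiable (at s)" using C1 unfolding C1_on_def by auto
  then show "(h x has_real_derivative D2 h x s) (at s)"
    unfolding D2_def using DERIV_deriv_iff_real_differentiable by (metis (no_types))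
next
  show "continuous_on U (\<lambda>(x, s). D2 h x s)" using C1 unfolding C1_on_def by auto
qed

lemma est1:
  assumes "e > 0"
  shows "\<exists>\<eta>>0. \<forall>x\<in>closed_segment p q. \<forall>s\<in>closed_segment p q. \<bar>s - x\<bar> < \<eta> \<longrightarrow>
     \<bar>h s x - h x x - (oint p s (\<lambda>t. D1 h t t) - oint p x (\<lambda>t. D1 h t t))\<bar> \<le> e * \<bar>s - x\<bar>"
proof -
  define W where "W = prod.swap -` U"
  have oW: "open W" unfolding W_def
    by (rule open_vimage[OF U(1)]) (intro continuous_intros)
  have "\<exists>\<eta>>0. \<forall>x\<in>closed_segment p q. \<forall>s\<in>closed_segment p q. \<bar>s - x\<bar> < \<eta> \<longrightarrow>
     \<bar>(\<lambda>x s. h s x) x s - (\<lambda>x s. h s x) x x - (oint p s (\<lambda>t. (\<lambda>x s. D1 h s x) t t) - oint p x (\<lambda>t. (\<lambda>x s. D1 h s x) t t))\<bar> \<le> e * \<bar>s - x\<bar>"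
  proof (rule estimate[where k="\<lambda>x s. h s x" and Dk="\<lambda>x s. D1 h s x", OF oW _ _ _ assms])
    fix x assume "x \<in> closed_segment p q" then show "(x, x) \<in> W" using U(2) by (simp add: W_def)
  next
    fix x s assume "(x, s) \<in> W"
    then have "(\<lambda>t. h t x) differentiable (at s)" using C1 unfolding C1_on_def W_def by auto
    then show "((\<lambda>x s. h s x) x has_real_derivative (\<lambda>x s. D1 h s x) x s) (at s)"
      unfolding D1_def using DERIV_deriv_iff_real_differentiable by (metis (no_types))
  next
    have c: "continuous_on U (\<lambda>(x, s). D1 h x s)" using C1 unfolding C1_on_def by auto
    have "continuous_on W ((\<lambda>(x, s). D1 h x s) \<circ> prod.swap)"
      by (rule continuous_on_compose[OF _ continuous_on_subset[OF c]])
         (auto simp: W_def intro!: continuous_intros)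
    then show "continuous_on W (\<lambda>(x, s). (\<lambda>x s. D1 h s x) x s)"
      by (simp add: o_def case_prod_beta prod.swap_def)
  qed
  then show ?thesis by simp
qed

lemma D1D2: "oint p q (\<lambda>t. D2 h t t) = - oint p q (\<lambda>t. D1 h t t)"
proof -
  let ?A = "oint p q (\<lambda>t. D2 h t t) + oint p q (\<lambda>t. D1 h t t)"
  have small: "\<bar>?A\<bar> \<le> 2 * e * \<bar>q - p\<bar>" if e: "e > 0" for e
  proof -
    obtain \<eta>2 where \<eta>2: "\<eta>2 > 0" "\<forall>x\<in>closed_segment p q. \<forall>s\<in>closed_segment p q. \<bar>s - x\<bar> < \<eta>2 \<longrightarrow>
     \<bar>h x s - h x x - (oint p s (\<lambda>t. D2 h t t) - oint p x (\<lambda>t. D2 h t t))\<bar> \<le> e * \<bar>s - x\<bar>"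
      using est2[OF e] by blast
    obtain \<eta>1 where \<eta>1: "\<eta>1 > 0" "\<forall>x\<in>closed_segment p q. \<forall>s\<in>closed_segment p q. \<bar>s - x\<bar> < \<eta>1 \<longrightarrow>
     \<bar>h s x - h x x - (oint p s (\<lambda>t. D1 h t t) - oint p x (\<lambda>t. D1 h t t))\<bar> \<le> e * \<bar>s - x\<bar>"
      using est1[OF e] by blast
    obtain m where m: "m \<ge> 1" "\<bar>q - p\<bar> / real m < min \<eta>1 \<eta>2"
      using exists_m[of "min \<eta>1 \<eta>2"] \<eta>1 \<eta>2 by auto
    let ?y = "ych p q m"
    have s2: "\<bar>(\<Sum>j<m. h (?y j) (?y (Suc j)) - h (?y j) (?y j)) - oint p q (\<lambda>t. D2 h t t)\<bar> \<le> e * \<bar>q - p\<bar>"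
      by (rule chain_sums(1)[where \<eta>=\<eta>2]) (use \<eta>2 m in \<open>auto simp: oint_same\<close>)
    have s1: "\<bar>(\<Sum>j<m. h (?y j) (?y (Suc j)) - h (?y (Suc j)) (?y (Suc j))) + oint p q (\<lambda>t. D1 h t t)\<bar> \<le> e * \<bar>q - p\<bar>"
      using chain_sums(2)[where \<eta>=\<eta>1 and k="\<lambda>x s. h s x" and \<Phi>="\<lambda>s. oint p s (\<lambda>t. D1 h t t)"] \<eta>1 m
      by (auto simp: oint_same)
    have eq: "(\<Sum>j<m. h (?y j) (?y (Suc j)) - h (?y j) (?y j)) = (\<Sum>j<m. h (?y j) (?y (Suc j)) - h (?y (Suc j)) (?y (Suc j)))"
      by (rule sum.cong) (use seg_h ych_seg m(1) in auto)
    show ?thesis using s1 s2 eq by linarith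
  qed
  have "?A = 0"
  proof (rule ccontr)
    assume ne: "?A \<noteq> 0"
    define e where "e = \<bar>?A\<bar> / (4 * (\<bar>q - p\<bar> + 1))"
    have pos: "0 < \<bar>q - p\<bar> + 1" using abs_ge_zero[of "q - p"] by linarith
    then have "0 < 4 * (\<bar>q - p\<bar> + 1)" by simp
    then have e: "e > 0" using ne unfolding e_def by (intro divide_pos_pos) auto
    have "2 * e * \<bar>q - p\<bar> < \<bar>?A\<bar>"
    proof -
      have "2 * e * \<bar>q - p\<bar> \<le> 2 * e * (\<bar>q - p\<bar> + 1)" using e by simp
      also have "2 * e * (\<bar>q - p\<bar> + 1) = \<bar>?A\<bar> / 2"
        unfolding e_def using pos by (simp add: divide_simps)
      also have "\<dots> < \<bar>?A\<bar>" using ne by simp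
      finally show ?thesis .
    qed
    then show False using small[OF e] by simp
  qed
  then show ?thesis by simp
qed

lemma chain_exists:
  assumes e: "e > 0"
  obtains m y where "m \<ge> 1" "y 0 = p" "\<And>j. j \<ge> m \<Longrightarrow> y j = q" "\<And>j. y j \<in> {0..1}"
    "(\<Sum>j<m. h (y j) (y (Suc j)) - hstar h) \<le> oint p q (\<lambda>t. D2 h t t) + e"
proof -
  define e' where "e' = e / (\<bar>q - p\<bar> + 1)"
  have e': "e' > 0" using e by (simp add: e'_def)
  obtain \<eta>2 where \<eta>2: "\<eta>2 > 0" "\<forall>x\<in>closed_segment p q. \<forall>s\<in>closed_segment p q. \<bar>s - x\<bar> < \<eta>2 \<longrightarrow>
     \<bar>h x s - h x x - (oint p s (\<lambda>t. D2 h t t) - oint p x (\<lambda>t. D2 h t t))\<bar> \<le> e' * \<bar>s - x\<bar>"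
    using est2[OF e'] by blast
  obtain m where m: "m \<ge> 1" "\<bar>q - p\<bar> / real m < \<eta>2" using exists_m[OF \<eta>2(1)] by blast
  let ?y = "ych p q m"
  have s2: "\<bar>(\<Sum>j<m. h (?y j) (?y (Suc j)) - h (?y j) (?y j)) - oint p q (\<lambda>t. D2 h t t)\<bar> \<le> e' * \<bar>q - p\<bar>"
    by (rule chain_sums(1)[where \<eta>=\<eta>2]) (use \<eta>2 m in \<open>auto simp: oint_same\<close>)
  have eq: "(\<Sum>j<m. h (?y j) (?y (Suc j)) - h (?y j) (?y j)) = (\<Sum>j<m. h (?y j) (?y (Suc j)) - hstar h)"
    by (rule sum.cong) (use seg_h ych_seg m(1) in auto)
  have "e' * \<bar>q - p\<bar> \<le> e"
  proof -
    have "e' * \<bar>q - p\<bar> = e * (\<bar>q - p\<bar> / (\<bar>q - p\<bar> + 1))" by (simp add: e'_def)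
    also have "\<dots> \<le> e * 1" using e by (intro mult_left_mono) auto
    finally show ?thesis by simp
  qed
  then show ?thesis
    using that[of m ?y, OF m(1) ych_0 ych_ge[OF m(1)] seg01[OF ych_seg[OF m(1)]]] s2 eq by linarith
qed

end



lemma oint_swap: "oint q p f = - oint p q f"
  by (cases p q rule: linorder_cases) (auto simp: oint_def)

lemma sum_split_add: "(\<Sum>i<K+m. f i) = (\<Sum>i<K. f i) + (\<Sum>j<m. f (K+j))" for f :: "nat \<Rightarrow> real"
  by (induction m) auto

lemma pad_cost:
  fixes y :: "nat \<Rightarrow> real" and h :: "real \<Rightarrow> real \<Rightarrow> real"
  assumes y0: "y 0 = p" and ym: "\<And>j. j \<ge> m \<Longrightarrow> y j = q" and hp: "h p p = hs" and hq: "h q q = hs"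
    and n: "n \<ge> K + m"
  shows "(\<Sum>i<n. h (y (i - K)) (y (Suc i - K)) - hs) = (\<Sum>j<m. h (y j) (y (Suc j)) - hs)"
  using n
proof (induction n rule: dec_induct)
  case base
  have "(\<Sum>i<K. h (y (i - K)) (y (Suc i - K)) - hs) = 0"
    by (rule sum.neutral) (auto simp: y0 hp)
  then show ?case by (simp add: sum_split_add)
next
  case (step n)
  have "h (y (n - K)) (y (Suc n - K)) - hs = 0" using step(1) ym hq by simp
  then show ?case using step by simp
qed

lemma peierls_val:
  assumes S1: "setting h p q U"
  shows "peierls (\<lambda>x. h (x 0) (x 1)) (\<lambda>_. p) (\<lambda>_. q) = ereal (oint p q (\<lambda>t. D2 h t t))"
proof -
  interpret S1: setting h p q U by (rule S1)
  have S2: "setting h q p U" using S1 unfolding setting_def by (simp add: closed_segment_commute)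
  interpret S2: setting h q p U by (rule S2)
  define hs where "hs = hstar h"
  have hp: "h p p = hs" and hq: "h q q = hs" unfolding hs_def using S1.seg_h by auto
  have p01: "p \<in> {0..1}" and q01: "q \<in> {0..1}" using S1.seg01 by auto
  define \<phi> where "\<phi> = (\<lambda>x::nat \<Rightarrow> real. h (x 0) (x 1))"
  have al: "alpha \<phi> = hs" unfolding \<phi>_def hs_def by (rule alpha_eq[OF S1.hH p01]) (simp add: hp hs_def)
  obtain C where C: "0 \<le> C" "\<And>x x' y y'. x \<in> {0..1} \<Longrightarrow> x' \<in> {0..1} \<Longrightarrow> y \<in> {0..1} \<Longrightarrow> y' \<in> {0..1}
     \<Longrightarrow> \<bar>h x y - h x' y'\<bar> \<le> C * (\<bar>x - x'\<bar> + \<bar>y - y'\<bar>)" using classH_lip[OF S1.hH] by blast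
  define A where "A = oint p q (\<lambda>t. D2 h t t)"
  have Aswap: "oint q p (\<lambda>t. D2 h t t) = - A" unfolding A_def by (rule oint_swap)
  define F where "F = (\<lambda>\<epsilon>::real. liminf (\<lambda>n. INF z \<in> Bset (\<lambda>_. p) (\<lambda>_. q) n \<epsilon>.
      ereal (\<Sum>i<n. \<phi> ((shift ^^ i) z) - alpha \<phi>)))"
  have cost: "(\<Sum>i<n. \<phi> ((shift ^^ i) z) - alpha \<phi>) = (\<Sum>i<n. h (z i) (z (Suc i)) - hs)" for n z
    unfolding al by (simp add: \<phi>_def shift_pow)
  have pX: "(\<lambda>_. p) \<in> Xs" and qX: "(\<lambda>_. q) \<in> Xs" using p01 q01 by (auto simp: Xs_def)
  have upper: "F \<epsilon> \<le> ereal A" if \<epsilon>: "\<epsilon> > 0" for \<epsilon>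
  proof (rule ereal_le_epsilon2)
    fix \<delta> :: real assume \<delta>: "0 < \<delta>"
    obtain m y where my: "m \<ge> 1" "y 0 = p" "\<And>j. j \<ge> m \<Longrightarrow> y j = q" "\<And>j. y j \<in> {0..1}"
      "(\<Sum>j<m. h (y j) (y (Suc j)) - hstar h) \<le> oint p q (\<lambda>t. D2 h t t) + \<delta>"
      using S1.chain_exists[OF \<delta>] by blast
    obtain K where K: "(1/2::real) ^ K < \<epsilon>" using real_arch_pow_inv[OF \<epsilon>, of "1/2"] by auto
    define z where "z k = y (k - K)" for k
    have zX: "z \<in> Xs" using my(4) by (simp add: Xs_def z_def)
    have inB: "z \<in> Bset (\<lambda>_. p) (\<lambda>_. q) n \<epsilon>" if n: "n \<ge> K + m" for n
    proof -
      have "dX (\<lambda>_. p) z \<le> (1/2) ^ K"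
        by (rule dX_agree[OF pX zX]) (simp add: z_def my(2))
      moreover have "(shift ^^ n) z = (\<lambda>_. q)"
        using n by (auto simp: shift_pow z_def intro!: my(3))
      ultimately show ?thesis using zX K \<epsilon> by (auto simp: Bset_def dX_eq0)
    qed
    have "eventually (\<lambda>n. (INF z \<in> Bset (\<lambda>_. p) (\<lambda>_. q) n \<epsilon>. ereal (\<Sum>i<n. \<phi> ((shift ^^ i) z) - alpha \<phi>))
         \<le> ereal (A + \<delta>)) sequentially"
    proof (rule eventually_sequentiallyI[of "K + m"])
      fix n assume n: "K + m \<le> n"
      have "(\<Sum>i<n. \<phi> ((shift ^^ i) z) - alpha \<phi>) = (\<Sum>j<m. h (y j) (y (Suc j)) - hs)"
        unfolding cost z_def by (rule pad_cost[of y p m q h hs K n, OF my(2) my(3) hp hq n])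
      also have "\<dots> \<le> A + \<delta>" using my(5) by (simp add: hs_def A_def)
      finally show "(INF z \<in> Bset (\<lambda>_. p) (\<lambda>_. q) n \<epsilon>. ereal (\<Sum>i<n. \<phi> ((shift ^^ i) z) - alpha \<phi>))
         \<le> ereal (A + \<delta>)"
        by (intro INF_lower2[OF inB[OF n]]) simp
    qed
    then have "F \<epsilon> \<le> ereal (A + \<delta>)" unfolding F_def by (intro Liminf_le) auto
    then show "F \<epsilon> \<le> ereal A + ereal \<delta>" by simp
  qed
  have lower: "\<exists>\<epsilon>0>0. \<forall>\<epsilon>. 0 < \<epsilon> \<and> \<epsilon> < \<epsilon>0 \<longrightarrow> ereal (A - \<delta>) \<le> F \<epsilon>" if \<delta>: "\<delta> > 0" for \<delta>
  proof -
    have \<delta>2: "\<delta> / 2 > 0" using \<delta> by simp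
    obtain m' w where w: "m' \<ge> 1" "w 0 = q" "\<And>j. j \<ge> m' \<Longrightarrow> w j = p" "\<And>j. w j \<in> {0..1}"
      "(\<Sum>j<m'. h (w j) (w (Suc j)) - hstar h) \<le> oint q p (\<lambda>t. D2 h t t) + \<delta> / 2"
      using S2.chain_exists[OF \<delta>2] by blast
    have wsum: "(\<Sum>j<m'. h (w j) (w (Suc j))) - real m' * hs \<le> - A + \<delta> / 2"
      using w(5) Aswap by (simp add: sum_subtractf hs_def)
    define \<epsilon>0 where "\<epsilon>0 = \<delta> / (8 * C + 8)"
    have pos: "0 < 8 * C + 8" using C(1) by simp
    show ?thesis
    proof (intro exI[of _ \<epsilon>0] conjI allI impI)
      show "\<epsilon>0 > 0" using \<delta> pos by (simp add: \<epsilon>0_def)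
      fix \<epsilon> assume \<epsilon>: "0 < \<epsilon> \<and> \<epsilon> < \<epsilon>0"
      have e1: "(8 * C + 8) * \<epsilon> < \<delta>" using \<epsilon> pos by (simp add: \<epsilon>0_def pos_less_divide_eq mult.commute)
      have e2: "0 \<le> C * \<epsilon>" using C(1) \<epsilon> by simp
      have key0: "A - \<delta> \<le> (\<Sum>i<n. h (z i) (z (Suc i)) - hs)"
        if z: "z \<in> Bset (\<lambda>_. p) (\<lambda>_. q) n \<epsilon>" for n z
      proof -
        have zX: "z \<in> Xs" and d1: "dX (\<lambda>_. p) z < \<epsilon>" and d2: "dX ((shift ^^ n) z) (\<lambda>_. q) < \<epsilon>"
          using z by (auto simp: Bset_def)
        have snX: "(shift ^^ n) z \<in> Xs" using zX by (simp add: shift_pow Xs_def)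
        have z01: "z i \<in> {0..1}" for i using zX Xs_mem by blast
        have a1: "\<bar>p - z 0\<bar> \<le> 2 * dX (\<lambda>_. p) z" using dX_term[OF pX zX, of 0] by simp
        have a2: "\<bar>z n - q\<bar> \<le> 2 * dX ((shift ^^ n) z) (\<lambda>_. q)"
          using dX_term[OF snX qX, of 0] by (simp add: shift_pow)
        have b1: "h p (z 0) - hs \<le> 2 * (C * \<epsilon>)"
        proof -
          have "\<bar>h p (z 0) - h p p\<bar> \<le> C * (\<bar>p - p\<bar> + \<bar>z 0 - p\<bar>)" by (rule C(2)) (use p01 z01 in auto)
          also have "\<dots> \<le> C * (2 * \<epsilon>)" using a1 d1 C(1) by (intro mult_left_mono) (auto simp: abs_minus_commute)
          finally show ?thesis using hp by simp
        qed
        have b2: "h (z n) q - hs \<le> 2 * (C * \<epsilon>)"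
        proof -
          have "\<bar>h (z n) q - h q q\<bar> \<le> C * (\<bar>z n - q\<bar> + \<bar>q - q\<bar>)" by (rule C(2)) (use q01 z01 in auto)
          also have "\<dots> \<le> C * (2 * \<epsilon>)" using a2 d2 C(1) by (intro mult_left_mono) auto
          finally show ?thesis using hq by simp
        qed
        define L where "L = p # (map z [0..<Suc n] @ map w [0..<Suc m'])"
        have hdz: "hd (map z [0..<Suc n]) = z 0" by (simp add: hd_map del: upt_Suc)
        have lz: "last (map z [0..<Suc n]) = z n" by (simp add: last_map del: upt_Suc)
        have hdw: "hd (map w [0..<Suc m']) = w 0" by (simp add: hd_map del: upt_Suc)
        have lw: "last (map w [0..<Suc m']) = w m'" by (simp add: last_map del: upt_Suc)
        have pcL: "pc h L = h p (z 0) + (\<Sum>i<n. h (z i) (z (Suc i))) + h (z n) q + (\<Sum>j<m'. h (w j) (w (Suc j)))"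
        proof -
          have "pc h L = pc h ([p] @ (map z [0..<Suc n] @ map w [0..<Suc m']))" by (simp add: L_def)
          also have "\<dots> = h p (z 0) + pc h (map z [0..<Suc n] @ map w [0..<Suc m'])"
            by (subst pc_append) (auto simp: hdz simp del: upt_Suc)
          also have "pc h (map z [0..<Suc n] @ map w [0..<Suc m']) =
              pc h (map z [0..<Suc n]) + h (z n) (w 0) + pc h (map w [0..<Suc m'])"
            by (subst pc_append) (auto simp: lz hdw simp del: upt_Suc)
          finally show ?thesis unfolding pc_map_upt w(2) by simp
        qed
        have cyc: "real (Suc (Suc (n + m'))) * hstar h \<le> pc h L"
        proof (rule cycle_H[OF S1.hH])
          show "length L = Suc (Suc (Suc (n + m')))" by (simp add: L_def)
          show "set L \<subseteq> {0..1}" using p01 z01 w(4) by (auto simp: L_def)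
          show "hd L = last L" using lw w(3)[of m'] by (simp add: L_def del: upt_Suc)
        qed simp
        have "(\<Sum>i<n. h (z i) (z (Suc i)) - hs) = (\<Sum>i<n. h (z i) (z (Suc i))) - real n * hs"
          by (simp add: sum_subtractf)
        moreover have "real (Suc (Suc (n + m'))) * hs = real n * hs + real m' * hs + hs + hs"
          by (simp add: algebra_simps)
        moreover have cyc': "real (Suc (Suc (n + m'))) * hs \<le> pc h L" using cyc by (simp add: hs_def)
        moreover have "(8 * C + 8) * \<epsilon> = 8 * (C * \<epsilon>) + 8 * \<epsilon>" by (simp add: algebra_simps)
        ultimately show "A - \<delta> \<le> (\<Sum>i<n. h (z i) (z (Suc i)) - hs)"
          using pcL b1 b2 wsum e1 e2 \<epsilon> by linarith
      qed
      have key: "ereal (A - \<delta>) \<le> ereal (\<Sum>i<n. \<phi> ((shift ^^ i) z) - alpha \<phi>)"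
        if z: "z \<in> Bset (\<lambda>_. p) (\<lambda>_. q) n \<epsilon>" for n z
        using key0[OF z] unfolding cost by simp
      show "ereal (A - \<delta>) \<le> F \<epsilon>" unfolding F_def
        by (intro Liminf_bounded always_eventually allI INF_greatest key)
    qed
  qed
  have lim: "(F \<longlongrightarrow> ereal A) (at_right 0)"
  proof (rule order_tendstoI)
    fix a assume "a < ereal A"
    then obtain r where r: "a < ereal r" "ereal r < ereal A" using ereal_dense2 by blast
    then have "A - r > 0" by simp
    then obtain \<epsilon>0 where e0: "\<epsilon>0 > 0" "\<forall>\<epsilon>. 0 < \<epsilon> \<and> \<epsilon> < \<epsilon>0 \<longrightarrow> ereal (A - (A - r)) \<le> F \<epsilon>"
      using lower by blast
    show "eventually (\<lambda>\<epsilon>. a < F \<epsilon>) (at_right 0)"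
      unfolding eventually_at_right_field using e0 r(1)
      by (intro exI[of _ \<epsilon>0]) (auto intro: less_le_trans)
  next
    fix a assume a: "ereal A < a"
    show "eventually (\<lambda>\<epsilon>. F \<epsilon> < a) (at_right 0)"
      using eventually_at_right_less[of "0::real"]
      by eventually_elim (use upper a in \<open>auto intro: le_less_trans\<close>)
  qed
  have "peierls \<phi> (\<lambda>_. p) (\<lambda>_. q) = Lim (at_right 0) F" unfolding peierls_def F_def by simp
  also have "\<dots> = ereal A" by (rule tendsto_Lim[OF _ lim]) simp
  finally show ?thesis unfolding \<phi>_def A_def .
qed


theorem proposition4p7:
  fixes h :: "real \<Rightarrow> real \<Rightarrow> real" and a b :: real
  assumes hH: "classH h"
    and ab: "a \<in> {0..1}" "b \<in> {0..1}" "a \<noteq> b"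
    and C1: "\<exists>U. open U \<and> {(x, x) | x. x \<in> closed_segment a b} \<subseteq> U \<and> C1_on U h"
    and sub: "closed_segment a b \<subseteq> mset_h h"
  shows "peierls (\<lambda>x. h (x 0) (x 1)) (\<lambda>_. a) (\<lambda>_. b) = ereal (oint a b (\<lambda>x. D2 h x x))
       \<and> oint a b (\<lambda>x. D2 h x x) = - oint a b (\<lambda>x. D1 h x x)
       \<and> ereal (- oint a b (\<lambda>x. D1 h x x)) = - peierls (\<lambda>x. h (x 0) (x 1)) (\<lambda>_. b) (\<lambda>_. a)"
proof -
  obtain U where U: "open U" "{(x, x) | x. x \<in> closed_segment a b} \<subseteq> U" "C1_on U h"
    using C1 by blast
  have S: "setting h a b U"
    by unfold_locales (use hH U sub in auto)
  have S': "setting h b a U"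
    by unfold_locales (use hH U sub in \<open>auto simp: closed_segment_commute\<close>)
  have e1: "peierls (\<lambda>x. h (x 0) (x 1)) (\<lambda>_. a) (\<lambda>_. b) = ereal (oint a b (\<lambda>t. D2 h t t))"
    by (rule peierls_val[OF S])
  have e2: "oint a b (\<lambda>t. D2 h t t) = - oint a b (\<lambda>t. D1 h t t)"
    by (rule setting.D1D2[OF S])
  have e3: "peierls (\<lambda>x. h (x 0) (x 1)) (\<lambda>_. b) (\<lambda>_. a) = ereal (oint b a (\<lambda>t. D2 h t t))"
    by (rule peierls_val[OF S'])
  have e4: "oint b a (\<lambda>t. D2 h t t) = - oint a b (\<lambda>t. D2 h t t)" by (rule oint_swap)
  show ?thesis using e1 e2 e3 e4 by simp
qed

end
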